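(* Let $R>0$ and let $S$ be the pseudosphere of radius $R$, parametrized by \[ \phi(u,v)=R\big(\sin v\cos u,\ \sin v\sin u,\ \ln\tan(v/2)+\cos v\big),\qquad 0<v<\pi/2, \] and oriented by the unit normal $N=\frac{\phi_u\times\phi_v}{\|\phi_u\times\phi_v\|}$. Let $0<\theta<\pi$ and let $\gamma$ be a loxodrome on $S$ with characteristic angle $\theta$, parametrized by arc length. Then the geodesic curvature of $\gamma$ is constant and equal to \[ k=-\frac{1}{R}\cos\theta. \]
   Context: For an oriented surface $S\subset\mathbb{R}^3$ with unit normal field $N$, the geodesic curvature of a unit-speed curve $\alpha$ on $S$ is $k=\langle\alpha'',N\times\alpha'\rangle$. The parallels of the pseudosphere are the circles $t\mapsto\phi(t,v)$ for fixed $v$. A loxodrome with characteristic angle $\theta\in(0,\pi)$ is a curve meeting all parallels at the fixed angle $\theta$, where $\theta$ is the signed angle (with respect to $N$) from the velocity $\frac{\partial}{\partial t}\phi(t,v)$ of the parallel to the velocity of the curve; the curve is oriented accordingly. *)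

theory Defs
  imports "HOL-Analysis.Analysis" "HOL-Analysis.Cross3"
begin

definition pseudosphere :: "real \<Rightarrow> real \<Rightarrow> real \<Rightarrow> real^3" where
  "pseudosphere R u v =
     R *\<^sub>R vector [sin v * cos u, sin v * sin u, ln (tan (v / 2)) + cos v]"

definition phi_u :: "real \<Rightarrow> real \<Rightarrow> real \<Rightarrow> real^3" where
  "phi_u R u v = vector_derivative (\<lambda>t. pseudosphere R t v) (at u)"

definition phi_v :: "real \<Rightarrow> real \<Rightarrow> real \<Rightarrow> real^3" where
  "phi_v R u v = vector_derivative (\<lambda>t. pseudosphere R u t) (at v)"

definition pseudo_normal :: "real \<Rightarrow> real \<Rightarrow> real \<Rightarrow> real^3" where
  "pseudo_normal R u v =
     (1 / norm (cross3 (phi_u R u v) (phi_v R u v))) *\<^sub>R (cross3 (phi_u R u v) (phi_v R u v))"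

text \<open>A velocity vector w at the point phi(u,v) makes signed angle theta (w.r.t. N)
  with the velocity phi_u of the parallel: w is obtained from the unit vector
  e = phi_u/|phi_u| by rotating by theta in the tangent plane oriented by N.\<close>
definition signed_angle_from_parallel :: "real \<Rightarrow> real \<Rightarrow> real \<Rightarrow> real \<Rightarrow> real^3 \<Rightarrow> bool" where
  "signed_angle_from_parallel R \<theta> u v w \<longleftrightarrow>
     (let e = (1 / norm (phi_u R u v)) *\<^sub>R phi_u R u v
      in w = cos \<theta> *\<^sub>R e + sin \<theta> *\<^sub>R (cross3 (pseudo_normal R u v) e))"

end

theory Submission
  imports Defs
begin

lemma vec3_eq: "(vector[a,b,c]::real^3) = a *\<^sub>R axis 1 1 + b *\<^sub>R axis 2 1 + c *\<^sub>R axis 3 1"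
  unfolding vec_eq_iff forall_3 by (simp add: axis_def)

lemma vec3_deriv:
  assumes "(f1 has_real_derivative d1) F" "(f2 has_real_derivative d2) F" "(f3 has_real_derivative d3) F"
  shows "((\<lambda>t. vector [f1 t, f2 t, f3 t] :: real^3) has_vector_derivative vector [d1,d2,d3]) F"
proof -
  have L: "((\<lambda>t. f t *\<^sub>R c) has_vector_derivative d *\<^sub>R c) F" if "(f has_real_derivative d) F" for f d and c :: "real^3"
    using bounded_linear.has_vector_derivative[OF bounded_linear_scaleR_left,
        OF that[unfolded has_real_derivative_iff_has_vector_derivative]] by blast
  show ?thesis unfolding vec3_eq
    by (intro has_vector_derivative_add L assms)
qed

lemma nth_deriv:
  assumes "(f has_vector_derivative (f'::real^'n)) F"
  shows "((\<lambda>t. f t $ i) has_real_derivative f' $ i) F"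
  using bounded_linear.has_vector_derivative[OF bounded_linear_vec_nth assms]
  by (simp add: has_real_derivative_iff_has_vector_derivative)

lemma phi_u_eq: "phi_u R u v = vector [- R * sin v * sin u, R * sin v * cos u, 0]"
proof -
  have "((\<lambda>t. pseudosphere R t v) has_vector_derivative vector [- R * sin v * sin u, R * sin v * cos u, 0]) (at u)"
  proof -
    have e: "(\<lambda>t. pseudosphere R t v) = (\<lambda>t. vector [R * (sin v * cos t), R * (sin v * sin t), R * (ln (tan (v / 2)) + cos v)])"
      unfolding pseudosphere_def by (auto simp: vec_eq_iff forall_3)
    show ?thesis unfolding e
      by (rule vec3_deriv) (auto intro!: derivative_eq_intros)
  qed
  then show ?thesis unfolding phi_u_def by (rule vector_derivative_at)
qed

lemma phi_v_eq:
  assumes "0 < v" "v < pi/2"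
  shows "phi_v R u v = vector [R * cos v * cos u, R * cos v * sin u, R * (1 / sin v - sin v)]"
proof -
  have c2: "cos (v/2) > 0" using assms by (intro cos_gt_zero) auto
  have s2: "sin (v/2) > 0" using assms by (intro sin_gt_zero) auto
  have t2: "tan (v/2) > 0" using c2 s2 by (simp add: tan_def)
  have sv: "sin v = 2 * sin (v/2) * cos (v/2)" using sin_double[of "v/2"] by simp
  have key: "inverse ((cos (v / 2))\<^sup>2) / (tan (v / 2) * 2) = 1 / sin v"
    using c2 s2 unfolding sv tan_def by (simp add: field_simps power2_eq_square inverse_eq_divide)
  have "((\<lambda>t. pseudosphere R u t) has_vector_derivative vector [R * cos v * cos u, R * cos v * sin u, R * (1 / sin v - sin v)]) (at v)"
  proof -
    have e: "(\<lambda>t. pseudosphere R u t) = (\<lambda>t. vector [R * (sin t * cos u), R * (sin t * sin u), R * (ln (tan (t / 2)) + cos t)])"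
      unfolding pseudosphere_def by (auto simp: vec_eq_iff forall_3)
    show ?thesis unfolding e
      apply (rule vec3_deriv)
        apply (auto intro!: derivative_eq_intros simp: c2 t2 key c2[THEN less_imp_neq, symmetric])
      done
  qed
  then show ?thesis unfolding phi_v_def by (rule vector_derivative_at)
qed


lemma norm_vec3: "norm (vector [a, b, c] :: real^3) = sqrt (a\<^sup>2 + b\<^sup>2 + c\<^sup>2)"
  by (simp add: norm_eq_sqrt_inner inner_vec_def sum_3 power2_eq_square)

lemma pn_eq:
  assumes R: "R > 0" and v: "0 < v" "v < pi/2"
  shows "pseudo_normal R u v = vector [cos u * cos v, sin u * cos v, - sin v]"
proof -
  have sv: "sin v > 0" using v by (intro sin_gt_zero) auto
  have cv: "cos v > 0" using v by (intro cos_gt_zero) auto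
  have p: "(sin v)\<^sup>2 = 1 - (cos v)\<^sup>2" "(sin u)\<^sup>2 = 1 - (cos u)\<^sup>2" by (simp_all add: sin_squared_eq)
  have cr: "cross3 (phi_u R u v) (phi_v R u v) = (R\<^sup>2 * cos v) *\<^sub>R vector [cos u * cos v, sin u * cos v, - sin v]"
    unfolding phi_u_eq phi_v_eq[OF v] cross3_def vec_eq_iff forall_3
    using sv by (simp add: field_simps) (use sin_cos_squared_add[of u] sin_cos_squared_add[of v] in algebra)
  have n1: "norm (vector [cos u * cos v, sin u * cos v, - sin v] :: real^3) = 1"
    unfolding norm_vec3 by (simp add: power_mult_distrib) (use sin_cos_squared_add[of u] sin_cos_squared_add[of v] in algebra)
  show ?thesis unfolding pseudo_normal_def cr using R cv n1 by simp
qed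


lemma norm_phi_u: "R > 0 \<Longrightarrow> sin v > 0 \<Longrightarrow> norm (phi_u R u v) = R * sin v"
proof -
  assume "R > 0" "sin v > 0"
  have "(- R * sin v * sin u)\<^sup>2 + (R * sin v * cos u)\<^sup>2 + 0\<^sup>2 = (R * sin v)\<^sup>2"
    by (simp add: power_mult_distrib) (use sin_cos_squared_add[of u] in algebra)
  then show ?thesis unfolding phi_u_eq norm_vec3 using \<open>R > 0\<close> \<open>sin v > 0\<close> by simp
qed

theorem proposition23:
  fixes R \<theta> :: real and I :: "real set"
    and \<gamma> \<gamma>' \<gamma>'' :: "real \<Rightarrow> real^3" and u v :: "real \<Rightarrow> real"
  assumes R_pos: "R > 0"
    and theta: "0 < \<theta>" "\<theta> < pi"
    and I: "open I" "is_interval I"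
    and on_S: "\<And>s. s \<in> I \<Longrightarrow> 0 < v s \<and> v s < pi / 2 \<and> \<gamma> s = pseudosphere R (u s) (v s)"
    and cont: "continuous_on I u" "continuous_on I v"
    and d1: "\<And>s. s \<in> I \<Longrightarrow> (\<gamma> has_vector_derivative \<gamma>' s) (at s)"
    and d2: "\<And>s. s \<in> I \<Longrightarrow> (\<gamma>' has_vector_derivative \<gamma>'' s) (at s)"
    and unit_speed: "\<And>s. s \<in> I \<Longrightarrow> norm (\<gamma>' s) = 1"
    and loxodrome: "\<And>s. s \<in> I \<Longrightarrow> signed_angle_from_parallel R \<theta> (u s) (v s) (\<gamma>' s)"
  shows "\<forall>s\<in>I. inner (\<gamma>'' s) (cross3 (pseudo_normal R (u s) (v s)) (\<gamma>' s)) = - cos \<theta> / R"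
proof -
  have sv: "sin (v t) > 0" if "t \<in> I" for t using on_S[OF that] by (intro sin_gt_zero) auto
  have cv: "cos (v t) > 0" if "t \<in> I" for t using on_S[OF that] by (intro cos_gt_zero) auto
  have N: "pseudo_normal R (u t) (v t) = vector [cos (u t) * cos (v t), sin (u t) * cos (v t), - sin (v t)]"
    if "t \<in> I" for t using on_S[OF that] R_pos by (intro pn_eq) auto
  have gp: "\<gamma>' t = vector [- cos \<theta> * sin (u t) + sin \<theta> * sin (v t) * cos (u t),
                cos \<theta> * cos (u t) + sin \<theta> * sin (v t) * sin (u t), sin \<theta> * cos (v t)]" if "t \<in> I" for t
  proof -
    have e: "(1 / norm (phi_u R (u t) (v t))) *\<^sub>R phi_u R (u t) (v t) = vector [- sin (u t), cos (u t), 0]"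
      unfolding norm_phi_u[OF R_pos sv[OF that]] unfolding phi_u_eq using R_pos sv[OF that]
      by (simp add: vec_eq_iff forall_3)
    have Ne: "cross3 (vector [cos (u t) * cos (v t), sin (u t) * cos (v t), - sin (v t)]) (vector [- sin (u t), cos (u t), 0])
       = vector [sin (v t) * cos (u t), sin (v t) * sin (u t), cos (v t)]"
      unfolding cross3_def vec_eq_iff forall_3
      by simp (use sin_cos_squared_add[of "u t"] in algebra)
    show ?thesis using loxodrome[OF that]
      unfolding signed_angle_from_parallel_def Let_def N[OF that] e Ne
      by (simp add: vec_eq_iff forall_3 algebra_simps)
  qed
  define A where "A t = \<gamma> t $ 1 / R" for t
  define B where "B t = \<gamma> t $ 2 / R" for t
  have AB: "A t = sin (v t) * cos (u t) \<and> B t = sin (v t) * sin (u t)" if "t \<in> I" for t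
    using on_S[OF that] R_pos unfolding A_def B_def pseudosphere_def by simp
  have q: "A t ^ 2 + B t ^ 2 = (sin (v t))\<^sup>2" if "t \<in> I" for t
    unfolding AB[OF that, THEN conjunct1] AB[OF that, THEN conjunct2]
    by (simp add: power_mult_distrib) (use sin_cos_squared_add[of "u t"] in algebra)
  have r: "sqrt (A t ^ 2 + B t ^ 2) = sin (v t)" if "t \<in> I" for t
    using q[OF that] sv[OF that] by simp
  have c: "sqrt (1 - (A t ^ 2 + B t ^ 2)) = cos (v t)" if "t \<in> I" for t
    using q[OF that] cv[OF that] by (simp add: cos_squared_eq[symmetric])
  show ?thesis
  proof
    fix s assume s: "s \<in> I"
    show "inner (\<gamma>'' s) (cross3 (pseudo_normal R (u s) (v s)) (\<gamma>' s)) = - cos \<theta> / R"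
    proof -
      define a where "a = A s"
      define b where "b = B s"
      define a1 where "a1 = \<gamma>' s $ 1 / R"
      define b1 where "b1 = \<gamma>' s $ 2 / R"
      define r where "r = sqrt (a ^ 2 + b ^ 2)"
      have rs: "r = sin (v s)" unfolding r_def a_def b_def using r[OF s] .
      have DA: "(A has_real_derivative a1) (at s)" unfolding A_def[abs_def] a1_def
        by (intro DERIV_cdivide nth_deriv d1 s)
      have DB: "(B has_real_derivative b1) (at s)" unfolding B_def[abs_def] b1_def
        by (intro DERIV_cdivide nth_deriv d1 s)
      have rpos: "a ^ 2 + b ^ 2 > 0" using q[OF s] sv[OF s] unfolding a_def b_def by simp
      have qlt: "1 - (a ^ 2 + b ^ 2) > 0" using q[OF s] sv[OF s] cv[OF s] unfolding a_def b_def
        by (simp add: sin_squared_eq)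
      have DG1: "((\<lambda>t. - cos \<theta> * B t / sqrt (A t ^ 2 + B t ^ 2) + sin \<theta> * A t) has_real_derivative
          (- cos \<theta> * ((b1 * r - b * ((a * a1 + b * b1) / r)) / r ^ 2) + sin \<theta> * a1)) (at s)"
      proof -
        have eqD: "b1 * cos \<theta> * sqrt (a\<^sup>2 + b\<^sup>2) - cos \<theta> * b * (inverse (sqrt (a\<^sup>2 + b\<^sup>2)) * (2 * (a1 * a) + 2 * (b1 * b))) / 2
           = cos \<theta> * (b1 * sqrt (a\<^sup>2 + b\<^sup>2) - b * (a * a1 + b * b1) / sqrt (a\<^sup>2 + b\<^sup>2))"
        proof -
          have g: "\<And>r::real. r > 0 \<Longrightarrow> b1 * cos \<theta> * r - cos \<theta> * b * (inverse r * (2 * (a1 * a) + 2 * (b1 * b))) / 2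
             = cos \<theta> * (b1 * r - b * (a * a1 + b * b1) / r)"
            by (simp add: inverse_eq_divide field_simps)
          show ?thesis by (rule g[OF real_sqrt_gt_zero[OF rpos]])
        qed
        show ?thesis
          using rpos eqD by (auto intro!: derivative_eq_intros DA DB simp: r_def a_def[symmetric] b_def[symmetric])
      qed
      have DG2: "((\<lambda>t. cos \<theta> * A t / sqrt (A t ^ 2 + B t ^ 2) + sin \<theta> * B t) has_real_derivative
          (cos \<theta> * ((a1 * r - a * ((a * a1 + b * b1) / r)) / r ^ 2) + sin \<theta> * b1)) (at s)"
      proof -
        have g: "\<And>r::real. r > 0 \<Longrightarrow> a1 * cos \<theta> * r - cos \<theta> * a * (inverse r * (2 * (a1 * a) + 2 * (b1 * b))) / 2
             = cos \<theta> * (a1 * r - a * (a * a1 + b * b1) / r)"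
            by (simp add: inverse_eq_divide field_simps)
        note eqD = g[OF real_sqrt_gt_zero[OF rpos]]
        show ?thesis
          using rpos eqD by (auto intro!: derivative_eq_intros DA DB simp: r_def a_def[symmetric] b_def[symmetric])
      qed
      have DG3: "((\<lambda>t. sin \<theta> * sqrt (1 - (A t ^ 2 + B t ^ 2))) has_real_derivative
          (sin \<theta> * (- (a * a1 + b * b1) / sqrt (1 - (a ^ 2 + b ^ 2))))) (at s)"
      proof -
        have g: "\<And>r::real. inverse r * (- (2 * (a1 * a)) - 2 * (b1 * b)) * sin \<theta> = sin \<theta> * (- (a * a1) - b * b1) * 2 / r"
          by (simp add: inverse_eq_divide algebra_simps add_divide_distrib diff_divide_distrib)
        show ?thesis
          using qlt g by (auto intro!: derivative_eq_intros DA DB simp: r_def a_def[symmetric] b_def[symmetric])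
      qed
      have F1: "- cos \<theta> * B t / sqrt (A t ^ 2 + B t ^ 2) + sin \<theta> * A t = \<gamma>' t $ 1" if "t \<in> I" for t
        using AB[OF that] r[OF that] gp[OF that] sv[OF that] by simp
      have F2: "cos \<theta> * A t / sqrt (A t ^ 2 + B t ^ 2) + sin \<theta> * B t = \<gamma>' t $ 2" if "t \<in> I" for t
        using AB[OF that] r[OF that] gp[OF that] sv[OF that] by simp
      have F3: "sin \<theta> * sqrt (1 - (A t ^ 2 + B t ^ 2)) = \<gamma>' t $ 3" if "t \<in> I" for t
        using c[OF that] gp[OF that] by simp
      have E1: "\<gamma>'' s $ 1 = - cos \<theta> * ((b1 * r - b * ((a * a1 + b * b1) / r)) / r ^ 2) + sin \<theta> * a1"
        using DERIV_unique[OF nth_deriv[OF d2[OF s], of 1] has_field_derivative_transform_within_open[OF DG1 I(1) s F1]] by simp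
      have E2: "\<gamma>'' s $ 2 = cos \<theta> * ((a1 * r - a * ((a * a1 + b * b1) / r)) / r ^ 2) + sin \<theta> * b1"
        using DERIV_unique[OF nth_deriv[OF d2[OF s], of 2] has_field_derivative_transform_within_open[OF DG2 I(1) s F2]] by simp
      have E3: "\<gamma>'' s $ 3 = sin \<theta> * (- (a * a1 + b * b1) / sqrt (1 - (a ^ 2 + b ^ 2)))"
        using DERIV_unique[OF nth_deriv[OF d2[OF s], of 3] has_field_derivative_transform_within_open[OF DG3 I(1) s F3]] by simp
      have cs: "sqrt (1 - (a ^ 2 + b ^ 2)) = cos (v s)" unfolding a_def b_def using c[OF s] .
      have av: "a = sin (v s) * cos (u s)" "b = sin (v s) * sin (u s)" unfolding a_def b_def using AB[OF s] by auto
      have a1v: "a1 = (- cos \<theta> * sin (u s) + sin \<theta> * sin (v s) * cos (u s)) / R"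
        "b1 = (cos \<theta> * cos (u s) + sin \<theta> * sin (v s) * sin (u s)) / R"
        unfolding a1_def b1_def gp[OF s] by simp_all
      have ab: "a * a1 + b * b1 = sin \<theta> * (sin (v s))\<^sup>2 / R"
        unfolding av a1v using R_pos by (simp add: field_simps) (use sin_cos_squared_add[of "u s"] in algebra)
      have E1': "\<gamma>'' s $ 1 = - (cos \<theta>)\<^sup>2 * cos (u s) / (R * sin (v s)) + sin \<theta> * (- cos \<theta> * sin (u s) + sin \<theta> * sin (v s) * cos (u s)) / R"
        unfolding E1 ab rs unfolding av a1v using R_pos sv[OF s] by (simp add: field_simps power2_eq_square)
      have E2': "\<gamma>'' s $ 2 = - (cos \<theta>)\<^sup>2 * sin (u s) / (R * sin (v s)) + sin \<theta> * (cos \<theta> * cos (u s) + sin \<theta> * sin (v s) * sin (u s)) / R"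
        unfolding E2 ab rs unfolding av a1v using R_pos sv[OF s] by (simp add: field_simps power2_eq_square)
      have E3': "\<gamma>'' s $ 3 = - (sin \<theta>)\<^sup>2 * (sin (v s))\<^sup>2 / (R * cos (v s))"
        unfolding E3 ab cs using R_pos cv[OF s] by (simp add: field_simps power2_eq_square)
      show ?thesis
        unfolding N[OF s] gp[OF s] cross3_def inner_vec_def sum_3
        using R_pos sv[OF s] cv[OF s]
        apply (simp add: E1' E2' E3' field_simps)
        apply (use sin_cos_squared_add[of "u s"] sin_cos_squared_add[of "v s"] sin_cos_squared_add[of \<theta>] in algebra)
        done
    qed
  qed
qed

end
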